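(* Let $(R,\mathfrak m)$ be a Noetherian local ring, $X$ a finitely generated $R$-module, $N$ a Burch submodule of $X$, $t\ge1$ an integer, and $M$ a finitely generated $R$-module with $\operatorname{Tor}_t^R(M,X/N)=\operatorname{Tor}_{t+1}^R(M,X/N)=0$. Then $\operatorname{pd}_R M<t$. (In particular, for $X=R$: if $I$ is an ideal with $\mathfrak m I:_R\mathfrak m\neq I:_R\mathfrak m$ and $\operatorname{Tor}_t^R(R/I,M)=\operatorname{Tor}_{t+1}^R(R/I,M)=0$ for some $t\ge1$, then $\operatorname{pd}_RM<t$.)
   Context: For a submodule $N\subseteq X$, $(N:_X\mathfrak m)=\{x\in X:\mathfrak m x\subseteq N\}$. $N$ is a Burch submodule of $X$ if $\mathfrak m(N:_X\mathfrak m)\neq\mathfrak m N$. The projective dimension of the zero module is $-\infty$. *)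

theory Defs
  imports Main "HOL.Modules" "HOL-Library.Function_Algebras"
begin

definition is_ideal :: "'a::comm_ring_1 set \<Rightarrow> bool" where
  "is_ideal I \<longleftrightarrow> 0 \<in> I \<and> (\<forall>x\<in>I. \<forall>y\<in>I. x + y \<in> I) \<and> (\<forall>r. \<forall>x\<in>I. r * x \<in> I)"

definition noetherian_ring :: "'a::comm_ring_1 itself \<Rightarrow> bool" where
  "noetherian_ring _ \<longleftrightarrow> (\<forall>I::'a set. is_ideal I \<longrightarrow>
      (\<exists>S. finite S \<and> S \<subseteq> I \<and> I = {\<Sum>s\<in>S. c s * s | c. True}))"

text \<open>The set of non-units; R is local iff it is a (proper) ideal, which is then the unique
  maximal ideal.\<close>
definition max_ideal :: "'a::comm_ring_1 set" where
  "max_ideal = {x. \<not> x dvd 1}"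

definition local_ring :: "'a::comm_ring_1 itself \<Rightarrow> bool" where
  "local_ring _ \<longleftrightarrow> (0::'a) \<noteq> 1 \<and> is_ideal (max_ideal :: 'a set)"

section \<open>Modules (the whole carrier type, with scalar multiplication sc)\<close>

definition fin_gen :: "('a::comm_ring_1 \<Rightarrow> 'b::ab_group_add \<Rightarrow> 'b) \<Rightarrow> bool" where
  "fin_gen sc \<longleftrightarrow> (\<exists>S. finite S \<and> module.span sc S = UNIV)"

definition colon_sub :: "('a::comm_ring_1 \<Rightarrow> 'b::ab_group_add \<Rightarrow> 'b) \<Rightarrow> 'b set \<Rightarrow> 'a set \<Rightarrow> 'b set" where
  "colon_sub sc N I = {x. \<forall>r\<in>I. sc r x \<in> N}"

definition prod_sub :: "('a::comm_ring_1 \<Rightarrow> 'b::ab_group_add \<Rightarrow> 'b) \<Rightarrow> 'a set \<Rightarrow> 'b set \<Rightarrow> 'b set" where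
  "prod_sub sc I S = module.span sc {sc r x | r x. r \<in> I \<and> x \<in> S}"

definition burch_submodule :: "('a::comm_ring_1 \<Rightarrow> 'b::ab_group_add \<Rightarrow> 'b) \<Rightarrow> 'b set \<Rightarrow> bool" where
  "burch_submodule sc N \<longleftrightarrow>
     prod_sub sc max_ideal (colon_sub sc N max_ideal) \<noteq> prod_sub sc max_ideal N"

text \<open>Elements of Y^n represented as functions nat => Y vanishing from index n on.\<close>
definition vecs :: "nat \<Rightarrow> (nat \<Rightarrow> 'b::zero) set" where
  "vecs n = {v. \<forall>i\<ge>n. v i = 0}"

definition mat_app :: "('a \<Rightarrow> 'b \<Rightarrow> 'b) \<Rightarrow> nat \<Rightarrow> (nat \<Rightarrow> nat \<Rightarrow> 'a) \<Rightarrow> (nat \<Rightarrow> 'b) \<Rightarrow> (nat \<Rightarrow> 'b::comm_monoid_add)" where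
  "mat_app sc n A v = (\<lambda>i. \<Sum>j<n. sc (A i j) (v j))"

definition vscale :: "'a::comm_ring_1 \<Rightarrow> (nat \<Rightarrow> 'a) \<Rightarrow> (nat \<Rightarrow> 'a)" where
  "vscale r v = (\<lambda>i. r * v i)"

definition lin_on :: "('a::comm_ring_1 \<Rightarrow> 'b::ab_group_add \<Rightarrow> 'b) \<Rightarrow> ('a \<Rightarrow> 'c::ab_group_add \<Rightarrow> 'c)
    \<Rightarrow> 'b set \<Rightarrow> ('b \<Rightarrow> 'c) \<Rightarrow> bool" where
  "lin_on sc1 sc2 A f \<longleftrightarrow> (\<forall>x\<in>A. \<forall>y\<in>A. f (x + y) = f x + f y) \<and> (\<forall>r. \<forall>x\<in>A. f (sc1 r x) = sc2 r (f x))"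

text \<open>A free resolution  ... -> R^(b 2) -d 2-> R^(b 1) -d 1-> R^(b 0) -eps-> M -> 0
  of M by finitely generated free modules; d k is a b(k-1) x b(k) matrix.\<close>
definition free_res :: "('a::comm_ring_1 \<Rightarrow> 'c::ab_group_add \<Rightarrow> 'c) \<Rightarrow> (nat \<Rightarrow> nat)
    \<Rightarrow> (nat \<Rightarrow> nat \<Rightarrow> nat \<Rightarrow> 'a) \<Rightarrow> ((nat \<Rightarrow> 'a) \<Rightarrow> 'c) \<Rightarrow> bool" where
  "free_res scM b d eps \<longleftrightarrow>
     (\<forall>k\<ge>1. \<forall>i j. i \<ge> b (k - 1) \<longrightarrow> d k i j = 0) \<and>
     lin_on vscale scM (vecs (b 0)) eps \<and>
     eps ` vecs (b 0) = UNIV \<and>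
     (\<forall>x\<in>vecs (b 0). eps x = 0 \<longleftrightarrow> x \<in> mat_app (*) (b 1) (d 1) ` vecs (b 1)) \<and>
     (\<forall>k\<ge>1. \<forall>x\<in>vecs (b k). mat_app (*) (b k) (d k) x = 0 \<longleftrightarrow>
         x \<in> mat_app (*) (b (Suc k)) (d (Suc k)) ` vecs (b (Suc k)))"

text \<open>Tor_t(M, X/N) = 0 (t >= 1), computed as the homology in degree t of the complex
  F \<otimes> X/N = ((X/N)^(b k), d k), where F = (b,d) is the given free resolution of M and X is the
  whole carrier type of sc.\<close>
definition tor_quot_vanishes :: "('a::comm_ring_1 \<Rightarrow> 'b::ab_group_add \<Rightarrow> 'b) \<Rightarrow> (nat \<Rightarrow> nat)
    \<Rightarrow> (nat \<Rightarrow> nat \<Rightarrow> nat \<Rightarrow> 'a) \<Rightarrow> 'b set \<Rightarrow> nat \<Rightarrow> bool" where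
  "tor_quot_vanishes sc b d N t \<longleftrightarrow>
     (\<forall>y\<in>vecs (b t). (\<forall>i. mat_app sc (b t) (d t) y i \<in> N) \<longrightarrow>
        (\<exists>z\<in>vecs (b (Suc t)). \<exists>w\<in>vecs (b t). (\<forall>i. w i \<in> N) \<and>
            y = mat_app sc (b (Suc t)) (d (Suc t)) z + w))"

text \<open>A submodule P of R^n is (finitely generated) projective iff it is a direct summand
  (retract) of a finite free module R^m.\<close>
definition fg_projective :: "nat \<Rightarrow> (nat \<Rightarrow> 'a::comm_ring_1) set \<Rightarrow> bool" where
  "fg_projective n P \<longleftrightarrow> P \<subseteq> vecs n \<and> module.subspace vscale P \<and>
     (\<exists>m s r. (\<forall>x\<in>P. s x \<in> vecs m) \<and> (\<forall>y\<in>vecs m. r y \<in> P) \<and>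
        lin_on vscale vscale P s \<and> lin_on vscale vscale (vecs m) r \<and> (\<forall>x\<in>P. r (s x) = x))"

text \<open>pd_R M < t: M has a projective resolution 0 -> P_(t-1) -> ... -> P_0 -> M -> 0
  (by finitely generated projectives).  For M = 0 this holds for every t >= 1
  (pd 0 = -infinity).\<close>
definition pd_less :: "('a::comm_ring_1 \<Rightarrow> 'c::ab_group_add \<Rightarrow> 'c) \<Rightarrow> nat \<Rightarrow> bool" where
  "pd_less scM t \<longleftrightarrow> (\<exists>(n::nat \<Rightarrow> nat) (P::nat \<Rightarrow> (nat \<Rightarrow> 'a) set) f eps.
     (\<forall>k. fg_projective (n k) (P k)) \<and>
     (\<forall>k\<ge>t. P k = {0}) \<and>
     (\<forall>k\<ge>1. (\<forall>x\<in>P k. f k x \<in> P (k - 1)) \<and> lin_on vscale vscale (P k) (f k)) \<and>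
     lin_on vscale scM (P 0) eps \<and> eps ` P 0 = UNIV \<and>
     (\<forall>x\<in>P 0. eps x = 0 \<longleftrightarrow> x \<in> f 1 ` P 1) \<and>
     (\<forall>k\<ge>1. \<forall>x\<in>P k. f k x = 0 \<longleftrightarrow> x \<in> f (Suc k) ` P (Suc k)))"

end

theory Submission imports Defs begin

lemma mI_add: "is_ideal I \<Longrightarrow> x \<in> I \<Longrightarrow> y \<in> I \<Longrightarrow> x + y \<in> I"
  by (simp add: is_ideal_def)
lemma mI_mult: "is_ideal I \<Longrightarrow> x \<in> I \<Longrightarrow> r * x \<in> I"
  by (simp add: is_ideal_def)
lemma mI_mult2: "is_ideal I \<Longrightarrow> x \<in> I \<Longrightarrow> x * r \<in> I"
  by (simp add: is_ideal_def mult.commute)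
lemma mI_zero: "is_ideal I \<Longrightarrow> 0 \<in> I"
  by (simp add: is_ideal_def)
lemma mI_neg: "is_ideal I \<Longrightarrow> x \<in> I \<Longrightarrow> - x \<in> I"
  using mI_mult[of I x "-1"] by simp
lemma mI_diff: "is_ideal I \<Longrightarrow> x \<in> I \<Longrightarrow> y \<in> I \<Longrightarrow> x - y \<in> I"
  using mI_add[of I x "-y"] mI_neg[of I y] by simp
lemma mI_sum: "is_ideal I \<Longrightarrow> (\<And>x. x \<in> A \<Longrightarrow> f x \<in> I) \<Longrightarrow> sum f A \<in> I"
  by (induction A rule: infinite_finite_induct) (auto simp: mI_zero mI_add)

lemma notm_unit: "(x::'a::comm_ring_1) \<notin> max_ideal \<Longrightarrow> \<exists>g. g * x = 1"
  unfolding max_ideal_def by (auto elim!: dvdE simp: mult.commute)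

lemma one_minus_m: assumes "is_ideal (max_ideal::'a::comm_ring_1 set)" "(\<mu>::'a) \<in> max_ideal"
  shows "1 - \<mu> \<notin> max_ideal"
proof
  assume "1 - \<mu> \<in> max_ideal"
  then have "(1 - \<mu>) + \<mu> \<in> max_ideal" using assms mI_add by blast
  then show False by (simp add: max_ideal_def)
qed

lemma nak:
  fixes \<mu> :: "nat \<Rightarrow> nat \<Rightarrow> 'a::comm_ring_1"
  assumes mi: "is_ideal (max_ideal::'a set)" and fin: "finite T"
  shows "(\<forall>j\<in>T. \<forall>k\<in>T. \<mu> j k \<in> max_ideal) \<Longrightarrow> (\<forall>j\<in>T. \<beta> j = (\<Sum>k\<in>T. \<mu> j k * \<beta> k)) \<Longrightarrow> \<forall>j\<in>T. \<beta> j = 0"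
  using fin
proof (induction T arbitrary: \<mu> rule: finite_induct)
  case empty then show ?case by simp
next
  case (insert p T)
  have bp: "\<beta> p = (\<Sum>k\<in>T. \<mu> p k * \<beta> k) + \<mu> p p * \<beta> p"
  proof -
    have "\<beta> p = (\<Sum>k\<in>insert p T. \<mu> p k * \<beta> k)" using insert.prems(2) by blast
    then show ?thesis using insert.hyps by (simp add: add.commute)
  qed
  have "1 - \<mu> p p \<notin> max_ideal" using one_minus_m[OF mi] insert.prems(1) by simp
  then obtain g where g: "g * (1 - \<mu> p p) = 1" using notm_unit by blast
  have "(1 - \<mu> p p) * \<beta> p = (\<Sum>k\<in>T. \<mu> p k * \<beta> k)" using bp by (metis add_diff_cancel_right' left_diff_distrib mult_1)
  then have "g * ((1 - \<mu> p p) * \<beta> p) = g * (\<Sum>k\<in>T. \<mu> p k * \<beta> k)" by simp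
  then have bp2: "\<beta> p = (\<Sum>k\<in>T. (g * \<mu> p k) * \<beta> k)"
    by (simp add: mult.assoc[symmetric] g sum_distrib_left)
  define \<mu>' where "\<mu>' j k = \<mu> j k + \<mu> j p * (g * \<mu> p k)" for j k
  have "\<forall>j\<in>T. \<beta> j = (\<Sum>k\<in>T. \<mu>' j k * \<beta> k)"
  proof
    fix j assume j: "j \<in> T"
    have "\<beta> j = (\<Sum>k\<in>insert p T. \<mu> j k * \<beta> k)" using insert.prems(2) j by blast
    also have "\<dots> = (\<Sum>k\<in>T. \<mu> j k * \<beta> k) + \<mu> j p * \<beta> p"
      using insert.hyps by (simp add: add.commute)
    also have "\<dots> = (\<Sum>k\<in>T. \<mu> j k * \<beta> k) + (\<Sum>k\<in>T. \<mu> j p * (g * \<mu> p k) * \<beta> k)"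
      by (subst bp2) (simp add: sum_distrib_left mult.assoc)
    also have "\<dots> = (\<Sum>k\<in>T. \<mu>' j k * \<beta> k)"
      unfolding \<mu>'_def distrib_right sum.distrib ..
    finally show "\<beta> j = (\<Sum>k\<in>T. \<mu>' j k * \<beta> k)" .
  qed
  moreover have "\<forall>j\<in>T. \<forall>k\<in>T. \<mu>' j k \<in> max_ideal"
    using insert.prems(1) unfolding \<mu>'_def by (meson insertCI mI_add mI_mult mi)
  ultimately have z: "\<forall>j\<in>T. \<beta> j = 0" using insert.IH by blast
  then have "\<beta> p = 0" using bp2 by simp
  with z show ?case by simp
qed


definition matv :: "nat set \<Rightarrow> nat set \<Rightarrow> (nat \<Rightarrow> nat \<Rightarrow> 'a) \<Rightarrow> (nat \<Rightarrow> 'a) \<Rightarrow> nat \<Rightarrow> 'a::comm_ring_1" where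
  "matv S T B v = (\<lambda>i. if i \<in> S then (\<Sum>j\<in>T. B i j * v j) else 0)"

lemma sum_delta_mult: "finite T \<Longrightarrow> j \<in> T \<Longrightarrow> (\<Sum>k\<in>T. f k * (if k = j then 1 else 0)) = (f j::'a::comm_ring_1)"
proof -
  assume a: "finite T" "j \<in> T"
  have "(\<Sum>k\<in>T. f k * (if k = j then 1 else 0)) = (\<Sum>k\<in>T. if k = j then f k else 0)"
    by (rule sum.cong) auto
  also have "\<dots> = f j" using a by (simp add: sum.delta)
  finally show ?thesis .
qed

lemma L3:
  fixes B :: "nat \<Rightarrow> nat \<Rightarrow> 'a::comm_ring_1"
  assumes mi: "is_ideal (max_ideal::'a set)"
  shows "finite S \<Longrightarrow> finite T \<Longrightarrow> (\<forall>v. (\<forall>i\<in>S. (\<Sum>j\<in>T. B i j * v j) \<in> max_ideal) \<longrightarrow>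
      (\<exists>\<kappa>. (\<forall>i\<in>S. (\<Sum>j\<in>T. B i j * \<kappa> j) = 0) \<and> (\<forall>j\<in>T. v j - \<kappa> j \<in> max_ideal))) \<Longrightarrow>
   \<exists>\<pi>. (\<forall>x y. \<pi> (x + y) = \<pi> x + \<pi> y) \<and> (\<forall>r x. \<pi> (vscale r x) = vscale r (\<pi> x)) \<and>
     (\<forall>y. (\<forall>i. i \<notin> S \<longrightarrow> y i = 0) \<longrightarrow> (\<forall>i. i \<notin> S \<longrightarrow> \<pi> y i = 0) \<and> (\<exists>v. y - \<pi> y = matv S T B v)) \<and>
     (\<forall>v. \<pi> (matv S T B v) = 0)"
proof (induction "card T" arbitrary: S T B rule: less_induct)
  case less
  show ?case
  proof (cases "\<forall>i\<in>S. \<forall>j\<in>T. B i j \<in> max_ideal")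
    case True
    have "\<forall>j\<in>T. \<exists>\<kappa>. (\<forall>i\<in>S. (\<Sum>k\<in>T. B i k * \<kappa> k) = 0) \<and> (\<forall>k\<in>T. (if k = j then 1 else 0) - \<kappa> k \<in> max_ideal)"
    proof
      fix j assume j: "j \<in> T"
      have "\<forall>i\<in>S. (\<Sum>k\<in>T. B i k * (if k = j then 1 else 0)) \<in> max_ideal"
        using True j less.prems(2) by (simp add: sum_delta_mult)
      then show "\<exists>\<kappa>. (\<forall>i\<in>S. (\<Sum>k\<in>T. B i k * \<kappa> k) = 0) \<and> (\<forall>k\<in>T. (if k = j then 1 else 0) - \<kappa> k \<in> max_ideal)"
        using less.prems(3)[rule_format, of "\<lambda>k. if k = j then 1 else 0"] by blast
    qed
    then obtain K where K: "\<forall>j\<in>T. (\<forall>i\<in>S. (\<Sum>k\<in>T. B i k * K j k) = 0) \<and> (\<forall>k\<in>T. (if k = j then 1 else 0) - K j k \<in> max_ideal)"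
      by metis
    have Bz: "\<forall>j\<in>T. B i j = 0" if i: "i \<in> S" for i
    proof -
      define \<mu> where "\<mu> j k = (if k = j then 1 else 0) - K j k" for j k
      have "\<forall>j\<in>T. B i j = (\<Sum>k\<in>T. \<mu> j k * B i k)"
      proof
        fix j assume j: "j\<in>T"
        have "(\<Sum>k\<in>T. \<mu> j k * B i k) = (\<Sum>k\<in>T. B i k * (if k = j then 1 else 0) - B i k * K j k)"
          by (rule sum.cong) (auto simp: \<mu>_def algebra_simps)
        also have "\<dots> = (\<Sum>k\<in>T. B i k * (if k = j then 1 else 0)) - (\<Sum>k\<in>T. B i k * K j k)"
          by (rule sum_subtractf)
        also have "\<dots> = B i j" using K j i less.prems(2) by (simp add: sum_delta_mult)
        finally show "B i j = (\<Sum>k\<in>T. \<mu> j k * B i k)" by simp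
      qed
      moreover have "\<forall>j\<in>T. \<forall>k\<in>T. \<mu> j k \<in> max_ideal" using K by (simp add: \<mu>_def)
      ultimately show ?thesis using nak[OF mi less.prems(2), of \<mu> "B i"] by blast
    qed
    then have mz: "matv S T B v = 0" for v by (auto simp: matv_def fun_eq_iff)
    show ?thesis
      by (rule exI[of _ "\<lambda>y. y"]) (auto simp: mz)
  next
    case False
    then obtain i0 j0 where i0: "i0 \<in> S" and j0: "j0 \<in> T" and nm: "B i0 j0 \<notin> max_ideal" by blast
    obtain g where g: "g * B i0 j0 = 1" using notm_unit nm by blast
    have g': "B i0 j0 * g = 1" using g by (simp add: mult.commute)
    define S' where "S' = S - {i0}"
    define T' where "T' = T - {j0}"
    define B' where "B' i k = B i k - B i j0 * g * B i0 k" for i k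
    have finS': "finite S'" using less.prems(1) by (simp add: S'_def)
    have finT': "finite T'" using less.prems(2) by (simp add: T'_def)
    have cardT: "card T' < card T" using j0 less.prems(2) unfolding T'_def by (meson card_Diff1_less)
    have I1: "(\<Sum>k\<in>T. B i k * v k) = B i j0 * (v j0 + g * (\<Sum>k\<in>T'. B i0 k * v k)) + (\<Sum>k\<in>T'. B' i k * v k)" for i v
    proof -
      have a: "(\<Sum>k\<in>T. B i k * v k) = B i j0 * v j0 + (\<Sum>k\<in>T'. B i k * v k)"
        using j0 less.prems(2) unfolding T'_def by (simp add: sum.remove)
      have b: "(\<Sum>k\<in>T'. B' i k * v k) = (\<Sum>k\<in>T'. B i k * v k - B i j0 * g * (B i0 k * v k))"
        by (rule sum.cong) (auto simp: B'_def algebra_simps)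
      have c: "\<dots> = (\<Sum>k\<in>T'. B i k * v k) - B i j0 * g * (\<Sum>k\<in>T'. B i0 k * v k)"
        by (simp add: sum_subtractf sum_distrib_left)
      show ?thesis using a b c by (simp add: algebra_simps)
    qed
    have I2: "(\<Sum>k\<in>T'. B' i0 k * v k) = 0" for v
      by (simp add: B'_def g')
    have H': "\<forall>v''. (\<forall>i\<in>S'. (\<Sum>k\<in>T'. B' i k * v'' k) \<in> max_ideal) \<longrightarrow>
       (\<exists>\<kappa>. (\<forall>i\<in>S'. (\<Sum>k\<in>T'. B' i k * \<kappa> k) = 0) \<and> (\<forall>k\<in>T'. v'' k - \<kappa> k \<in> max_ideal))"
    proof (intro allI impI)
      fix v'' assume hv: "\<forall>i\<in>S'. (\<Sum>k\<in>T'. B' i k * v'' k) \<in> max_ideal"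
      define v where "v = v''(j0 := - g * (\<Sum>k\<in>T'. B i0 k * v'' k))"
      have vT': "v k = v'' k" if "k \<in> T'" for k using that by (simp add: v_def T'_def)
      have sT': "(\<Sum>k\<in>T'. f k * v k) = (\<Sum>k\<in>T'. f k * v'' k)" for f
        by (rule sum.cong) (auto simp: vT')
      have x0: "v j0 + g * (\<Sum>k\<in>T'. B i0 k * v k) = 0" by (simp add: sT') (simp add: v_def)
      have eq: "(\<Sum>k\<in>T. B i k * v k) = (\<Sum>k\<in>T'. B' i k * v'' k)" for i
        using I1[of i v] x0 sT' by simp
      have "\<forall>i\<in>S. (\<Sum>k\<in>T. B i k * v k) \<in> max_ideal"
      proof
        fix i assume "i \<in> S"
        show "(\<Sum>k\<in>T. B i k * v k) \<in> max_ideal"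
        proof (cases "i = i0")
          case True then show ?thesis using eq I2 mI_zero[OF mi] by simp
        next
          case False then show ?thesis using eq hv \<open>i \<in> S\<close> by (simp add: S'_def)
        qed
      qed
      then obtain \<kappa> where \<kappa>: "\<forall>i\<in>S. (\<Sum>k\<in>T. B i k * \<kappa> k) = 0" "\<forall>k\<in>T. v k - \<kappa> k \<in> max_ideal"
        using less.prems(3) by blast
      have k0: "\<kappa> j0 + g * (\<Sum>k\<in>T'. B i0 k * \<kappa> k) = 0"
      proof -
        have "B i0 j0 * (\<kappa> j0 + g * (\<Sum>k\<in>T'. B i0 k * \<kappa> k)) = 0"
          using I1[of i0 \<kappa>] I2[of \<kappa>] \<kappa>(1) i0 by simp
        then have "g * (B i0 j0 * (\<kappa> j0 + g * (\<Sum>k\<in>T'. B i0 k * \<kappa> k))) = 0" by simp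
        then show ?thesis by (simp add: mult.assoc[symmetric] g)
      qed
      show "\<exists>\<kappa>. (\<forall>i\<in>S'. (\<Sum>k\<in>T'. B' i k * \<kappa> k) = 0) \<and> (\<forall>k\<in>T'. v'' k - \<kappa> k \<in> max_ideal)"
      proof (rule exI[of _ \<kappa>], intro conjI ballI)
        fix i assume "i \<in> S'"
        then show "(\<Sum>k\<in>T'. B' i k * \<kappa> k) = 0" using I1[of i \<kappa>] k0 \<kappa>(1) by (simp add: S'_def)
      next
        fix k assume "k \<in> T'"
        then show "v'' k - \<kappa> k \<in> max_ideal" using vT' \<kappa>(2) by (auto simp: T'_def)
      qed
    qed
    obtain \<pi>'' where p1: "\<forall>x y. \<pi>'' (x + y) = \<pi>'' x + \<pi>'' y" and p2: "\<forall>r x. \<pi>'' (vscale r x) = vscale r (\<pi>'' x)"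
      and p3: "\<forall>y. (\<forall>i. i \<notin> S' \<longrightarrow> y i = 0) \<longrightarrow> (\<forall>i. i \<notin> S' \<longrightarrow> \<pi>'' y i = 0) \<and> (\<exists>v. y - \<pi>'' y = matv S' T' B' v)"
      and p4: "\<forall>v. \<pi>'' (matv S' T' B' v) = 0"
      using less.hyps[OF cardT finS' finT' H'] by blast
    define col where "col i = (if i \<in> S then B i j0 else 0)" for i
    define arg where "arg y = (\<lambda>i. y i - col i * (g * y i0))" for y :: "nat \<Rightarrow> 'a"
    define \<pi> where "\<pi> y = \<pi>'' (arg y)" for y
    have argadd: "arg (x + y) = arg x + arg y" for x y by (simp add: arg_def fun_eq_iff algebra_simps)
    have argsc: "arg (vscale r x) = vscale r (arg x)" for r x by (simp add: arg_def vscale_def fun_eq_iff algebra_simps)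
    have mv': "matv S' T' B' w = (\<lambda>i. if i \<in> S then (\<Sum>k\<in>T'. B' i k * w k) else 0)" for w
      by (auto simp: matv_def S'_def fun_eq_iff I2)
    show ?thesis
    proof (rule exI[of _ \<pi>], intro conjI)
      show "\<forall>x y. \<pi> (x + y) = \<pi> x + \<pi> y" by (simp add: \<pi>_def argadd p1)
    next
      show "\<forall>r x. \<pi> (vscale r x) = vscale r (\<pi> x)" by (simp add: \<pi>_def argsc p2)
    next
      show "\<forall>y. (\<forall>i. i \<notin> S \<longrightarrow> y i = 0) \<longrightarrow> (\<forall>i. i \<notin> S \<longrightarrow> \<pi> y i = 0) \<and> (\<exists>v. y - \<pi> y = matv S T B v)"
      proof (intro allI impI)
            fix y :: "nat \<Rightarrow> 'a" assume ys: "\<forall>i. i \<notin> S \<longrightarrow> y i = 0"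
      have as: "\<forall>i. i \<notin> S' \<longrightarrow> arg y i = 0"
      proof (intro allI impI)
        fix i assume "i \<notin> S'"
        then have "i = i0 \<or> i \<notin> S" by (auto simp: S'_def)
        then show "arg y i = 0"
        proof
          assume "i = i0" then show ?thesis using i0 by (simp add: arg_def col_def mult.assoc[symmetric] g')
        next
          assume "i \<notin> S" then show ?thesis using ys by (simp add: arg_def col_def)
        qed
      qed
      obtain v'' where v'': "arg y - \<pi>'' (arg y) = matv S' T' B' v''" using p3 as by blast
      have part1: "\<forall>i. i \<notin> S \<longrightarrow> \<pi> y i = 0" using p3 as by (auto simp: \<pi>_def S'_def)
      define v where "v = v''(j0 := g * y i0 - g * (\<Sum>k\<in>T'. B i0 k * v'' k))"
      have vT': "v k = v'' k" if "k \<in> T'" for k using that by (simp add: v_def T'_def)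
      have sT': "(\<Sum>k\<in>T'. f k * v k) = (\<Sum>k\<in>T'. f k * v'' k)" for f
        by (rule sum.cong) (auto simp: vT')
      have x0: "v j0 + g * (\<Sum>k\<in>T'. B i0 k * v k) = g * y i0" by (simp add: sT') (simp add: v_def)
      have "y - \<pi> y = matv S T B v"
      proof
        fix i
        have e1: "y i - \<pi> y i = col i * (g * y i0) + matv S' T' B' v'' i"
          using fun_cong[OF v'', of i] by (simp add: \<pi>_def arg_def algebra_simps)
        show "(y - \<pi> y) i = matv S T B v i"
        proof (cases "i \<in> S")
          case True
          then show ?thesis using e1 I1[of i v] x0 sT' I2 by (auto simp: matv_def col_def S'_def)
        next
          case False
          then show ?thesis using e1 by (auto simp: matv_def col_def S'_def)
        qed
      qed
      then show "(\<forall>i. i \<notin> S \<longrightarrow> \<pi> y i = 0) \<and> (\<exists>v. y - \<pi> y = matv S T B v)" using part1 by blast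
      qed
    next
      show "\<forall>v. \<pi> (matv S T B v) = 0"
      proof
      fix v
      define X where "X = v j0 + g * (\<Sum>k\<in>T'. B i0 k * v k)"
      have m0: "matv S T B v i0 = B i0 j0 * X" using I1[of i0 v] I2[of v] i0 by (simp add: matv_def X_def)
      have gm0: "g * matv S T B v i0 = X" by (simp add: m0 mult.assoc[symmetric] g)
      have "arg (matv S T B v) = matv S' T' B' v"
      proof
        fix i show "arg (matv S T B v) i = matv S' T' B' v i"
          using gm0 I1[of i v] I2 by (auto simp: arg_def matv_def col_def X_def S'_def)
      qed
      then show "\<pi> (matv S T B v) = 0" by (simp add: \<pi>_def p4)
      qed
    qed
  qed
qed


lemma L2:
  fixes sc :: "'a::comm_ring_1 \<Rightarrow> 'b::ab_group_add \<Rightarrow> 'b" and q p :: nat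
    and A :: "nat \<Rightarrow> nat \<Rightarrow> 'a" and v :: "nat \<Rightarrow> 'a" and n :: "nat \<Rightarrow> 'b"
  assumes md: "module sc" and mi: "is_ideal (max_ideal::'a set)" and Ps: "module.subspace sc P"
    and uP: "u \<notin> P" and NP: "\<forall>r\<in>max_ideal. \<forall>n\<in>N. sc r n \<in> P"
  shows "(\<forall>j<q. n j \<in> N) \<Longrightarrow> (\<forall>i<p. sc (v i) u - (\<Sum>j<q. sc (A i j) (n j)) \<in> P) \<Longrightarrow>
     \<exists>c. \<forall>i<p. v i - (\<Sum>j<q. A i j * c j) \<in> max_ideal"
proof (induction q arbitrary: A v n)
  case 0
  interpret m: module sc by (rule md)
  have "\<forall>i<p. v i \<in> max_ideal"
  proof (intro allI impI)
    fix i assume i: "i<p"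
    show "v i \<in> max_ideal"
    proof (rule ccontr)
      assume "v i \<notin> max_ideal"
      then obtain g where g: "g * v i = 1" using notm_unit by blast
      have "sc (v i) u \<in> P" using 0 i by simp
      then have "sc g (sc (v i) u) \<in> P" using m.subspace_scale[OF Ps] by blast
      then have "u \<in> P" using g by simp
      with uP show False ..
    qed
  qed
  then show ?case by simp
next
  case (Suc q)
  interpret m: module sc by (rule md)
  show ?case
  proof (cases "\<forall>i<p. A i q \<in> max_ideal")
    case True
    have "\<forall>i<p. sc (v i) u - (\<Sum>j<q. sc (A i j) (n j)) \<in> P"
    proof (intro allI impI)
      fix i assume i: "i < p"
      have "sc (v i) u - (\<Sum>j<Suc q. sc (A i j) (n j)) + sc (A i q) (n q) \<in> P"
      proof (rule m.subspace_add[OF Ps])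
        show "sc (v i) u - (\<Sum>j<Suc q. sc (A i j) (n j)) \<in> P" using Suc.prems(2) i by blast
        show "sc (A i q) (n q) \<in> P" using NP True Suc.prems(1) i by simp
      qed
      moreover have "sc (v i) u - (\<Sum>j<Suc q. sc (A i j) (n j)) + sc (A i q) (n q) = sc (v i) u - (\<Sum>j<q. sc (A i j) (n j))"
        by simp
      ultimately show "sc (v i) u - (\<Sum>j<q. sc (A i j) (n j)) \<in> P" by simp
    qed
    moreover have nq: "\<forall>j<q. n j \<in> N" using Suc.prems(1) by simp
    ultimately obtain c where c: "\<forall>i<p. v i - (\<Sum>j<q. A i j * c j) \<in> max_ideal" using Suc.IH[OF nq] by blast
    have sc': "(\<Sum>j<q. A i j * (c(q:=0)) j) = (\<Sum>j<q. A i j * c j)" for i by (rule sum.cong) auto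
    show ?thesis
      by (rule exI[of _ "c(q := 0)"]) (use c sc' in simp)
  next
    case False
    then obtain i0 where i0: "i0 < p" and nm: "A i0 q \<notin> max_ideal" by blast
    obtain g where g: "g * A i0 q = 1" using notm_unit nm by blast
    define v' where "v' i = v i - A i q * g * v i0" for i
    define A' where "A' i j = A i j - A i q * g * A i0 j" for i j
    define E where "E i = sc (v i) u - (\<Sum>j<Suc q. sc (A i j) (n j))" for i
    have key: "sc (v' i) u - (\<Sum>j<q. sc (A' i j) (n j)) = E i - sc (A i q * g) (E i0)" for i
    proof -
      have s1: "(\<Sum>j<q. sc (A' i j) (n j)) = (\<Sum>j<q. sc (A i j) (n j)) - sc (A i q * g) (\<Sum>j<q. sc (A i0 j) (n j))"
        by (simp add: A'_def m.scale_left_diff_distrib sum_subtractf m.scale_sum_right)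
      have gq: "A i q * g * A i0 q = A i q" using g by (simp add: mult.assoc)
      have gq2: "g * (A i0 q * A i q) = A i q" by (simp add: mult.assoc[symmetric] g)
      have s2: "sc (A i q * g) (E i0) = sc (A i q * g * v i0) u - sc (A i q * g) (\<Sum>j<q. sc (A i0 j) (n j)) - sc (A i q) (n q)"
        by (simp add: E_def m.scale_right_diff_distrib m.scale_right_distrib gq)
      show ?thesis
        using gq2 by (simp add: s1 s2 E_def v'_def m.scale_left_diff_distrib algebra_simps)
    qed
    have "\<forall>i<p. sc (v' i) u - (\<Sum>j<q. sc (A' i j) (n j)) \<in> P"
    proof (intro allI impI)
      fix i assume "i < p"
      then have "E i \<in> P" "E i0 \<in> P" using Suc.prems(2) i0 by (simp_all add: E_def)
      then show "sc (v' i) u - (\<Sum>j<q. sc (A' i j) (n j)) \<in> P"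
        unfolding key by (intro m.subspace_diff[OF Ps] m.subspace_scale[OF Ps])
    qed
    moreover have nq: "\<forall>j<q. n j \<in> N" using Suc.prems(1) by simp
    ultimately obtain c' where c': "\<forall>i<p. v' i - (\<Sum>j<q. A' i j * c' j) \<in> max_ideal" using Suc.IH[OF nq] by blast
    define c where "c = c'(q := g * (v i0 - (\<Sum>j<q. A i0 j * c' j)))"
    have cc: "(\<Sum>j<q. A i j * c j) = (\<Sum>j<q. A i j * c' j)" for i by (rule sum.cong) (auto simp: c_def)
    have eq: "v i - (\<Sum>j<Suc q. A i j * c j) = v' i - (\<Sum>j<q. A' i j * c' j)" for i
    proof -
      have "(\<Sum>j<q. A' i j * c' j) = (\<Sum>j<q. A i j * c' j) - A i q * g * (\<Sum>j<q. A i0 j * c' j)"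
        by (simp add: A'_def sum_subtractf sum_distrib_left algebra_simps)
      then show ?thesis by (simp add: cc v'_def) (simp add: c_def algebra_simps)
    qed
    show ?thesis using c' eq by (intro exI[of _ c]) simp
  qed
qed


lemma mod_vscale: "module (vscale :: 'a::comm_ring_1 \<Rightarrow> (nat \<Rightarrow> 'a) \<Rightarrow> (nat \<Rightarrow> 'a))"
  by unfold_locales (simp_all add: vscale_def fun_eq_iff algebra_simps)

lemma sub_vscale: "module.subspace (vscale :: 'a::comm_ring_1 \<Rightarrow> (nat \<Rightarrow> 'a) \<Rightarrow> (nat \<Rightarrow> 'a)) S \<longleftrightarrow>
   0 \<in> S \<and> (\<forall>x\<in>S. \<forall>y\<in>S. x + y \<in> S) \<and> (\<forall>c. \<forall>x\<in>S. vscale c x \<in> S)"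
  by (rule module.subspace_def[OF mod_vscale])

lemma vecs_0: "0 \<in> vecs n" by (simp add: vecs_def)
lemma vecs_add: "(x::nat\<Rightarrow>'a::ab_group_add) \<in> vecs n \<Longrightarrow> y \<in> vecs n \<Longrightarrow> x + y \<in> vecs n" by (simp add: vecs_def)
lemma vecs_diff: "(x::nat\<Rightarrow>'a::ab_group_add) \<in> vecs n \<Longrightarrow> y \<in> vecs n \<Longrightarrow> x - y \<in> vecs n" by (simp add: vecs_def)
lemma vecs_sc: "(x::nat\<Rightarrow>'a::comm_ring_1) \<in> vecs n \<Longrightarrow> vscale c x \<in> vecs n" by (simp add: vecs_def vscale_def)

lemma sub_vecs: "module.subspace vscale (vecs n :: (nat \<Rightarrow> 'a::comm_ring_1) set)"
  by (simp add: sub_vscale vecs_0 vecs_add vecs_sc)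

lemma mat_add: "mat_app (*) n D (x + y) = mat_app (*) n D x + (mat_app (*) n D y :: nat \<Rightarrow> 'a::comm_ring_1)"
  by (simp add: mat_app_def fun_eq_iff algebra_simps sum.distrib)
lemma mat_sc: "mat_app (*) n D (vscale r x) = vscale r (mat_app (*) n D x :: nat \<Rightarrow> 'a::comm_ring_1)"
  by (simp add: mat_app_def vscale_def fun_eq_iff sum_distrib_left algebra_simps)
lemma mat_zero: "mat_app (*) n D 0 = (0 :: nat \<Rightarrow> 'a::comm_ring_1)"
  by (simp add: mat_app_def fun_eq_iff)
lemma mat_diff: "mat_app (*) n D (x - y) = mat_app (*) n D x - (mat_app (*) n D y :: nat \<Rightarrow> 'a::comm_ring_1)"
  by (simp add: mat_app_def fun_eq_iff algebra_simps sum_subtractf)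
lemma mat_lin: "lin_on vscale vscale S (mat_app (*) n D :: (nat \<Rightarrow> 'a::comm_ring_1) \<Rightarrow> _)"
  by (simp add: lin_on_def mat_add mat_sc)
lemma mat_vecs: "(\<forall>i j. i \<ge> m \<longrightarrow> D i j = 0) \<Longrightarrow> mat_app (*) n D (x :: nat \<Rightarrow> 'a::comm_ring_1) \<in> vecs m"
  by (simp add: mat_app_def vecs_def)

lemma mat_delta: "l < n \<Longrightarrow> mat_app (*) n D (\<lambda>j. if j = l then 1 else 0) = (\<lambda>i. D i l :: 'a::comm_ring_1)"
  by (simp add: mat_app_def fun_eq_iff sum_delta_mult)

lemma comp_zero:
  fixes sc :: "'a::comm_ring_1 \<Rightarrow> 'b::ab_group_add \<Rightarrow> 'b"
  assumes md: "module sc" and z: "\<forall>i l. l < q \<longrightarrow> (\<Sum>j<p. D i j * E j l) = 0"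
  shows "mat_app sc p D (mat_app sc q E w) = 0"
proof
  interpret m: module sc by (rule md)
  fix i
  have "mat_app sc p D (mat_app sc q E w) i = (\<Sum>j<p. \<Sum>l<q. sc (D i j * E j l) (w l))"
    by (simp add: mat_app_def m.scale_sum_right)
  also have "\<dots> = (\<Sum>l<q. \<Sum>j<p. sc (D i j * E j l) (w l))" by (rule sum.swap)
  also have "\<dots> = (\<Sum>l<q. sc (\<Sum>j<p. D i j * E j l) (w l))" by (simp add: m.scale_sum_left)
  also have "\<dots> = 0" using z by simp
  finally show "mat_app sc p D (mat_app sc q E w) i = 0 i" by simp
qed

lemma fgp_vecs: "fg_projective n (vecs n :: (nat \<Rightarrow> 'a::comm_ring_1) set)"
  unfolding fg_projective_def
  by (intro conjI sub_vecs exI[of _ n] exI[of _ "\<lambda>x. x"]) (auto simp: lin_on_def)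

lemma fgp_zero: "fg_projective n ({0} :: (nat \<Rightarrow> 'a::comm_ring_1) set)"
  unfolding fg_projective_def
  by (intro conjI exI[of _ 0] exI[of _ "\<lambda>x. 0"]) (auto simp: lin_on_def sub_vscale vecs_0 vscale_def fun_eq_iff)


theorem corollary3p14:
  fixes sc :: "'a::comm_ring_1 \<Rightarrow> 'b::ab_group_add \<Rightarrow> 'b"
    and scM :: "'a \<Rightarrow> 'c::ab_group_add \<Rightarrow> 'c"
    and N :: "'b set" and t :: nat
    and b :: "nat \<Rightarrow> nat" and d :: "nat \<Rightarrow> nat \<Rightarrow> nat \<Rightarrow> 'a" and eps :: "(nat \<Rightarrow> 'a) \<Rightarrow> 'c"
  assumes "noetherian_ring TYPE('a)" and "local_ring TYPE('a)"
    and "module sc" and "fin_gen sc"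
    and "module.subspace sc N" and "burch_submodule sc N"
    and "t \<ge> 1"
    and "module scM" and "fin_gen scM"
    and "free_res scM b d eps"
    and "tor_quot_vanishes sc b d N t" and "tor_quot_vanishes sc b d N (Suc t)"
  shows "pd_less scM t"
proof -
  note md = assms(3) and Ns = assms(5)
  interpret X: module sc by (rule md)
  have mi: "is_ideal (max_ideal::'a set)" using assms(2) by (simp add: local_ring_def)
  obtain s where ts: "t = Suc s" using assms(7) by (cases t) auto
  have FR0: "\<And>k i j. k \<ge> 1 \<Longrightarrow> i \<ge> b (k - 1) \<Longrightarrow> d k i j = 0"
    and FR1: "lin_on vscale scM (vecs (b 0)) eps"
    and FR2: "eps ` vecs (b 0) = UNIV"
    and FR3: "\<forall>x\<in>vecs (b 0). eps x = 0 \<longleftrightarrow> x \<in> mat_app (*) (b 1) (d 1) ` vecs (b 1)"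
    and FR4: "\<And>k. k \<ge> 1 \<Longrightarrow> \<forall>x\<in>vecs (b k). mat_app (*) (b k) (d k) x = 0 \<longleftrightarrow>
         x \<in> mat_app (*) (b (Suc k)) (d (Suc k)) ` vecs (b (Suc k))"
  proof -
    note F = assms(10)[unfolded free_res_def]
    show "\<And>k i j. k \<ge> 1 \<Longrightarrow> i \<ge> b (k - 1) \<Longrightarrow> d k i j = 0" using F[THEN conjunct1] by blast
    show "lin_on vscale scM (vecs (b 0)) eps" using F by (elim conjE)
    show "eps ` vecs (b 0) = UNIV" using F by (elim conjE)
    show "\<forall>x\<in>vecs (b 0). eps x = 0 \<longleftrightarrow> x \<in> mat_app (*) (b 1) (d 1) ` vecs (b 1)" using F by (elim conjE)
    show "\<And>k. k \<ge> 1 \<Longrightarrow> \<forall>x\<in>vecs (b k). mat_app (*) (b k) (d k) x = 0 \<longleftrightarrow>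
         x \<in> mat_app (*) (b (Suc k)) (d (Suc k)) ` vecs (b (Suc k))"
      using F[THEN conjunct2, THEN conjunct2, THEN conjunct2, THEN conjunct2] by blast
  qed
  have rows: "\<forall>i j. i \<ge> b k \<longrightarrow> d (Suc k) i j = 0" for k using FR0[of "Suc k"] by simp
  have entz: "(\<Sum>j<b k. d k i j * d (Suc k) j l) = 0" if k: "k \<ge> 1" and l: "l < b (Suc k)" for k i l
  proof -
    let ?e = "\<lambda>j. if j = l then 1 else (0::'a)"
    have e: "?e \<in> vecs (b (Suc k))" using l by (simp add: vecs_def)
    have "mat_app (*) (b (Suc k)) (d (Suc k)) ?e \<in> vecs (b k)" by (rule mat_vecs[OF rows])
    then have "mat_app (*) (b k) (d k) (mat_app (*) (b (Suc k)) (d (Suc k)) ?e) = 0"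
      using FR4[OF k] e by blast
    then have "mat_app (*) (b k) (d k) (\<lambda>i. d (Suc k) i l) = 0" by (simp only: mat_delta[OF l])
    then show ?thesis unfolding mat_app_def by (metis zero_fun_def)
  qed
  define P where "P = prod_sub sc max_ideal N"
  have Psub: "X.subspace P" by (simp add: P_def prod_sub_def)
  have NP: "\<forall>r\<in>max_ideal. \<forall>n\<in>N. sc r n \<in> P"
    unfolding P_def prod_sub_def by (blast intro: X.span_base)
  have Ncol: "N \<subseteq> colon_sub sc N max_ideal"
  proof
    fix n assume "n \<in> N"
    then have "\<forall>r. sc r n \<in> N" using X.subspace_scale[OF Ns] by blast
    then show "n \<in> colon_sub sc N max_ideal" unfolding colon_sub_def by blast
  qed
  have "P \<subseteq> prod_sub sc max_ideal (colon_sub sc N max_ideal)"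
    unfolding P_def prod_sub_def using Ncol by (intro X.span_mono) blast
  then have "\<not> prod_sub sc max_ideal (colon_sub sc N max_ideal) \<subseteq> P"
    using assms(6) unfolding burch_submodule_def P_def by blast
  moreover have "\<exists>a x. a \<in> max_ideal \<and> x \<in> colon_sub sc N max_ideal \<and> sc a x \<notin> P
    \<or> prod_sub sc max_ideal (colon_sub sc N max_ideal) \<subseteq> P"
  proof (cases "\<exists>a x. a \<in> max_ideal \<and> x \<in> colon_sub sc N max_ideal \<and> sc a x \<notin> P")
    case False
    then have "{sc r y | r y. r \<in> max_ideal \<and> y \<in> colon_sub sc N max_ideal} \<subseteq> P" by blast
    then have "prod_sub sc max_ideal (colon_sub sc N max_ideal) \<subseteq> P"
      unfolding prod_sub_def by (rule X.span_minimal[OF _ Psub])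
    then show ?thesis by blast
  qed blast
  ultimately obtain a x where a: "a \<in> max_ideal" and xc: "x \<in> colon_sub sc N max_ideal" and axP: "sc a x \<notin> P"
    by blast
  have xN: "\<forall>r\<in>max_ideal. sc r x \<in> N" using xc by (simp add: colon_sub_def)
  have H: "\<forall>v. (\<forall>i\<in>{..<b s}. (\<Sum>j\<in>{..<b (Suc s)}. d (Suc s) i j * v j) \<in> max_ideal) \<longrightarrow>
      (\<exists>\<kappa>. (\<forall>i\<in>{..<b s}. (\<Sum>j\<in>{..<b (Suc s)}. d (Suc s) i j * \<kappa> j) = 0) \<and>
            (\<forall>j\<in>{..<b (Suc s)}. v j - \<kappa> j \<in> max_ideal))"
  proof (intro allI impI)
    fix v assume hv: "\<forall>i\<in>{..<b s}. (\<Sum>j\<in>{..<b (Suc s)}. d (Suc s) i j * v j) \<in> max_ideal"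
    define v0 where "v0 j = (if j < b (Suc s) then v j else 0)" for j
    define y where "y j = sc (v0 j) x" for j
    have sumv0: "(\<Sum>j<b (Suc s). f j * v0 j) = (\<Sum>j<b (Suc s). f j * v j)" for f
      by (rule sum.cong) (auto simp: v0_def)
    have yv: "y \<in> vecs (b (Suc s))" by (simp add: vecs_def y_def v0_def)
    have My: "mat_app sc (b (Suc s)) (d (Suc s)) y i = sc (\<Sum>j<b (Suc s). d (Suc s) i j * v0 j) x" for i
      by (simp add: mat_app_def y_def X.scale_sum_left)
    have yN: "\<forall>i. mat_app sc (b (Suc s)) (d (Suc s)) y i \<in> N"
    proof
      fix i show "mat_app sc (b (Suc s)) (d (Suc s)) y i \<in> N"
      proof (cases "i < b s")
        case True
        then show ?thesis using hv xN by (simp add: My sumv0)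
      next
        case False
        then have "\<And>j. d (Suc s) i j = 0" using rows by simp
        then show ?thesis using X.subspace_0[OF Ns] by (simp add: My)
      qed
    qed
    obtain z w where zv: "z \<in> vecs (b (Suc (Suc s)))" and wv: "w \<in> vecs (b (Suc s))" and wN: "\<forall>i. w i \<in> N"
      and yzw: "y = mat_app sc (b (Suc (Suc s))) (d (Suc (Suc s))) z + w"
      using assms(11) yv yN unfolding tor_quot_vanishes_def ts by blast
    define z' where "z' j = sc a (z j)" for j
    have z'v: "z' \<in> vecs (b (Suc (Suc s)))" using zv by (simp add: vecs_def z'_def)
    have Mz': "mat_app sc (b (Suc (Suc s))) (d (Suc (Suc s))) z' i = sc a (mat_app sc (b (Suc (Suc s))) (d (Suc (Suc s))) z i)" for i
      by (simp add: mat_app_def z'_def X.scale_sum_right mult.commute)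
    have Mz: "mat_app sc (b (Suc (Suc s))) (d (Suc (Suc s))) z i = y i - w i" for i
      using fun_cong[OF yzw, of i] by simp
    have axN: "sc a x \<in> N" using xN a by blast
    have Mz'2: "mat_app sc (b (Suc (Suc s))) (d (Suc (Suc s))) z' i = sc (v0 i) (sc a x) - sc a (w i)" for i
      by (simp add: Mz' Mz X.scale_right_diff_distrib y_def mult.commute)
    have z'N: "\<forall>i. mat_app sc (b (Suc (Suc s))) (d (Suc (Suc s))) z' i \<in> N"
    proof
      fix i
      have "sc (v0 i) (sc a x) - sc a (w i) \<in> N"
        by (rule X.subspace_diff[OF Ns]) (use X.subspace_scale[OF Ns] axN wN in blast)+
      then show "mat_app sc (b (Suc (Suc s))) (d (Suc (Suc s))) z' i \<in> N" by (simp only: Mz'2)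
    qed
    obtain z'' w' where w'v: "w' \<in> vecs (b (Suc (Suc s)))" and w'N: "\<forall>i. w' i \<in> N"
      and z'zw: "z' = mat_app sc (b (Suc (Suc (Suc s)))) (d (Suc (Suc (Suc s)))) z'' + w'"
      using assms(12) z'v z'N unfolding tor_quot_vanishes_def ts by blast
    have AC: "mat_app sc (b (Suc (Suc s))) (d (Suc (Suc s))) (mat_app sc (b (Suc (Suc (Suc s)))) (d (Suc (Suc (Suc s)))) z'') = 0"
      by (rule comp_zero[OF md]) (intro allI impI entz, simp_all)
    have Madd: "mat_app sc n D (f + g) = mat_app sc n D f + mat_app sc n D g" for n D f g
      by (simp add: mat_app_def fun_eq_iff X.scale_right_distrib sum.distrib)
    have Mw': "mat_app sc (b (Suc (Suc s))) (d (Suc (Suc s))) z' = mat_app sc (b (Suc (Suc s))) (d (Suc (Suc s))) w'"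
      by (subst z'zw) (simp add: Madd AC)
    have hyp: "\<forall>i<b (Suc s). sc (v0 i) (sc a x) - (\<Sum>j<b (Suc (Suc s)). sc (d (Suc (Suc s)) i j) (w' j)) \<in> P"
    proof (intro allI impI)
      fix i assume "i < b (Suc s)"
      have "(\<Sum>j<b (Suc (Suc s)). sc (d (Suc (Suc s)) i j) (w' j)) = sc (v0 i) (sc a x) - sc a (w i)"
        using fun_cong[OF Mw', of i] Mz'2[of i] by (simp add: mat_app_def)
      then show "sc (v0 i) (sc a x) - (\<Sum>j<b (Suc (Suc s)). sc (d (Suc (Suc s)) i j) (w' j)) \<in> P"
        using NP a wN by simp
    qed
    obtain c where c: "\<forall>i<b (Suc s). v0 i - (\<Sum>j<b (Suc (Suc s)). d (Suc (Suc s)) i j * c j) \<in> max_ideal"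
      using L2[OF md mi Psub axP NP, of "b (Suc (Suc s))" w' "b (Suc s)" v0 "d (Suc (Suc s))"] w'N hyp by blast
    define c0 where "c0 j = (if j < b (Suc (Suc s)) then c j else 0)" for j
    define \<kappa> where "\<kappa> = mat_app (*) (b (Suc (Suc s))) (d (Suc (Suc s))) c0"
    have c0v: "c0 \<in> vecs (b (Suc (Suc s)))" by (simp add: vecs_def c0_def)
    have \<kappa>v: "\<kappa> \<in> vecs (b (Suc s))" unfolding \<kappa>_def by (rule mat_vecs[OF rows])
    have "mat_app (*) (b (Suc s)) (d (Suc s)) \<kappa> = 0"
      using FR4[of "Suc s"] \<kappa>v c0v unfolding \<kappa>_def by auto
    then have k1: "\<forall>i\<in>{..<b s}. (\<Sum>j\<in>{..<b (Suc s)}. d (Suc s) i j * \<kappa> j) = 0"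
      by (auto simp: mat_app_def fun_eq_iff)
    have \<kappa>j: "\<kappa> j = (\<Sum>l<b (Suc (Suc s)). d (Suc (Suc s)) j l * c l)" for j
      unfolding \<kappa>_def mat_app_def by (rule sum.cong) (auto simp: c0_def)
    have k2: "\<forall>j\<in>{..<b (Suc s)}. v j - \<kappa> j \<in> max_ideal"
      using c by (auto simp: \<kappa>j v0_def)
    show "\<exists>\<kappa>. (\<forall>i\<in>{..<b s}. (\<Sum>j\<in>{..<b (Suc s)}. d (Suc s) i j * \<kappa> j) = 0) \<and>
            (\<forall>j\<in>{..<b (Suc s)}. v j - \<kappa> j \<in> max_ideal)" using k1 k2 by blast
  qed
  obtain \<pi> where \<pi>add: "\<forall>x y. \<pi> (x + y) = \<pi> x + \<pi> y" and \<pi>sc: "\<forall>r x. \<pi> (vscale r x) = vscale r (\<pi> x)"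
    and \<pi>3: "\<forall>y. (\<forall>i. i \<notin> {..<b s} \<longrightarrow> y i = 0) \<longrightarrow> (\<forall>i. i \<notin> {..<b s} \<longrightarrow> \<pi> y i = 0) \<and>
               (\<exists>v. y - \<pi> y = matv {..<b s} {..<b (Suc s)} (d (Suc s)) v)"
    and \<pi>4: "\<forall>v. \<pi> (matv {..<b s} {..<b (Suc s)} (d (Suc s)) v) = 0"
    using L3[OF mi _ _ H] by blast
  define DD where "DD = mat_app (*) (b (Suc s)) (d (Suc s))"
  define tr where "tr w = (\<lambda>j. if j < b (Suc s) then w j else (0::'a))" for w
  have trv: "tr w \<in> vecs (b (Suc s))" for w by (simp add: tr_def vecs_def)
  have tr_id: "w \<in> vecs (b (Suc s)) \<Longrightarrow> tr w = w" for w by (auto simp: tr_def vecs_def fun_eq_iff)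
  have MV: "matv {..<b s} {..<b (Suc s)} (d (Suc s)) w = DD (tr w)" for w
  proof
    fix i show "matv {..<b s} {..<b (Suc s)} (d (Suc s)) w i = DD (tr w) i"
    proof (cases "i < b s")
      case True then show ?thesis unfolding matv_def DD_def mat_app_def
        by (simp, intro sum.cong) (auto simp: tr_def)
    next
      case False then show ?thesis using rows[of s] by (simp add: matv_def DD_def mat_app_def)
    qed
  qed
  have DDv: "DD w \<in> vecs (b s)" for w unfolding DD_def by (rule mat_vecs[OF rows])
  have \<pi>0: "\<pi> 0 = 0" using \<pi>add[rule_format, of 0 0] by simp
  have \<pi>diff: "\<pi> (y - z) = \<pi> y - \<pi> z" for y z
    using \<pi>add[rule_format, of "y - z" z] by (simp add: algebra_simps)
  have supp: "y \<in> vecs (b s) \<Longrightarrow> \<forall>i. i \<notin> {..<b s} \<longrightarrow> y i = 0" for y :: "nat \<Rightarrow> 'a" by (simp add: vecs_def)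
  have \<pi>1: "y \<in> vecs (b s) \<Longrightarrow> \<pi> y \<in> vecs (b s)" for y
    using \<pi>3 supp[of y] by (simp add: vecs_def)
  have \<pi>2: "y \<in> vecs (b s) \<Longrightarrow> \<exists>w\<in>vecs (b (Suc s)). y - \<pi> y = DD w" for y
    using \<pi>3 supp[of y] MV trv by metis
  have \<pi>3': "w \<in> vecs (b (Suc s)) \<Longrightarrow> \<pi> (DD w) = 0" for w
    using \<pi>4 MV tr_id by metis
  have idem: "y \<in> vecs (b s) \<Longrightarrow> \<pi> (\<pi> y) = \<pi> y" for y
  proof -
    assume y: "y \<in> vecs (b s)"
    then obtain w where "w \<in> vecs (b (Suc s))" "y - \<pi> y = DD w" using \<pi>2 by blast
    then have "\<pi> (y - \<pi> y) = 0" using \<pi>3' by simp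
    then show ?thesis by (simp add: \<pi>diff)
  qed
  define C0 where "C0 = \<pi> ` vecs (b s)"
  have C0v: "C0 \<subseteq> vecs (b s)" using \<pi>1 by (auto simp: C0_def)
  have C0fix: "x \<in> C0 \<Longrightarrow> \<pi> x = x" for x using idem by (auto simp: C0_def)
  have C00: "0 \<in> C0" using \<pi>0 vecs_0 unfolding C0_def by force
  have C0inj: "x \<in> C0 \<Longrightarrow> x \<in> DD ` vecs (b (Suc s)) \<Longrightarrow> x = 0" for x
  proof -
    assume a: "x \<in> C0" "x \<in> DD ` vecs (b (Suc s))"
    then obtain w where "w \<in> vecs (b (Suc s))" "x = DD w" by blast
    then have "\<pi> x = 0" using \<pi>3' by simp
    then show "x = 0" using C0fix[OF a(1)] by simp
  qed
  have C0sub: "module.subspace vscale C0"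
    unfolding sub_vscale
  proof (intro conjI ballI allI)
    show "0 \<in> C0" by (rule C00)
  next
    fix x y assume "x \<in> C0" "y \<in> C0"
    then obtain x' y' where "x' \<in> vecs (b s)" "y' \<in> vecs (b s)" "x = \<pi> x'" "y = \<pi> y'" by (auto simp: C0_def)
    then show "x + y \<in> C0" using \<pi>add vecs_add unfolding C0_def by (metis image_eqI)
  next
    fix c x assume "x \<in> C0"
    then obtain x' where "x' \<in> vecs (b s)" "x = \<pi> x'" by (auto simp: C0_def)
    then show "vscale c x \<in> C0" using \<pi>sc vecs_sc unfolding C0_def by (metis image_eqI)
  qed
  have a1: "\<forall>x\<in>C0. x \<in> vecs (b s)" using C0v by blast
  have a2: "\<forall>y\<in>vecs (b s). \<pi> y \<in> C0" by (simp add: C0_def)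
  have a3: "lin_on vscale vscale C0 (\<lambda>x. x)" by (simp add: lin_on_def)
  have a4: "lin_on vscale vscale (vecs (b s)) \<pi>" using \<pi>add \<pi>sc by (simp add: lin_on_def)
  have a5: "\<forall>x\<in>C0. \<pi> x = x" using C0fix by blast
  have fgC0: "fg_projective (b s) C0"
    unfolding fg_projective_def
    apply (intro conjI)
      apply (rule C0v)
     apply (rule C0sub)
    apply (rule exI[of _ "b s"], rule exI[of _ "\<lambda>x. x"], rule exI[of _ \<pi>])
    using a1 a2 a3 a4 a5 by (intro conjI)
  have imgeq: "mat_app (*) (b s) (d s) ` vecs (b s) = mat_app (*) (b s) (d s) ` C0" if s1: "s \<ge> 1"
  proof
    show "mat_app (*) (b s) (d s) ` C0 \<subseteq> mat_app (*) (b s) (d s) ` vecs (b s)" using C0v by blast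
  next
    show "mat_app (*) (b s) (d s) ` vecs (b s) \<subseteq> mat_app (*) (b s) (d s) ` C0"
    proof
      fix z assume "z \<in> mat_app (*) (b s) (d s) ` vecs (b s)"
      then obtain y where y: "y \<in> vecs (b s)" and z: "z = mat_app (*) (b s) (d s) y" by blast
      obtain w where w: "w \<in> vecs (b (Suc s))" and yw: "y - \<pi> y = DD w" using \<pi>2[OF y] by blast
      have "mat_app (*) (b s) (d s) (DD w) = 0" using FR4[OF s1] DDv w unfolding DD_def by blast
      then have "mat_app (*) (b s) (d s) (y - \<pi> y) = 0" by (simp add: yw)
      then have "z = mat_app (*) (b s) (d s) (\<pi> y)" by (simp add: z mat_diff)
      moreover have "\<pi> y \<in> C0" using y by (simp add: C0_def)
      ultimately show "z \<in> mat_app (*) (b s) (d s) ` C0" by blast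
    qed
  qed
  have eps0: "eps 0 = 0"
    using FR1 vecs_0 unfolding lin_on_def by (metis add_0 add_cancel_right_right)
  have epseq: "eps y = eps (\<pi> y)" if s0: "s = 0" and y: "y \<in> vecs (b 0)" for y
  proof -
    have y': "y \<in> vecs (b s)" using y s0 by simp
    obtain w where w: "w \<in> vecs (b (Suc s))" and yw: "y - \<pi> y = DD w" using \<pi>2[OF y'] by blast
    have "eps (DD w) = 0" using FR3 DDv w s0 unfolding DD_def by auto
    moreover have "eps y = eps (\<pi> y) + eps (y - \<pi> y)"
      using FR1 \<pi>1[OF y'] vecs_diff[OF y' \<pi>1[OF y']] s0 y unfolding lin_on_def by (metis add.commute diff_add_cancel)
    ultimately show ?thesis by (simp add: yw)
  qed
  define f where "f k = mat_app (*) (b k) (d k)" for k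
  define Pk where "Pk k = (if k < s then vecs (b k) else if k = s then C0 else {0})" for k
  have Pkv: "Pk k \<subseteq> vecs (b k)" for k using C0v vecs_0 by (auto simp: Pk_def)
  have Pk0: "0 \<in> Pk k" for k using C00 vecs_0 by (auto simp: Pk_def)
  have f0: "f k 0 = 0" for k by (simp add: f_def mat_zero)
  have G1: "\<forall>k. fg_projective (b k) (Pk k)"
  proof
    fix k show "fg_projective (b k) (Pk k)"
      unfolding Pk_def using fgC0 fgp_vecs[of "b k"] fgp_zero[of "b k"] by auto
  qed
  have G2: "\<forall>k\<ge>Suc s. Pk k = {0}" by (simp add: Pk_def)
  have G3: "\<forall>k\<ge>1. (\<forall>x\<in>Pk k. f k x \<in> Pk (k - 1)) \<and> lin_on vscale vscale (Pk k) (f k)"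
  proof (intro allI impI conjI ballI)
    fix k x assume k: "k \<ge> (1::nat)" and x: "x \<in> Pk k"
    show "f k x \<in> Pk (k - 1)"
    proof (cases "k \<le> s")
      case True
      then have "k - 1 < s" using k by linarith
      then have "Pk (k - 1) = vecs (b (k - 1))" by (simp add: Pk_def)
      then show ?thesis unfolding f_def using FR0[OF k] by (simp add: mat_vecs)
    next
      case False
      then have "x = 0" using x by (simp add: Pk_def)
      then show ?thesis using f0 Pk0 by simp
    qed
  next
    fix k show "lin_on vscale vscale (Pk k) (f k)" unfolding f_def by (rule mat_lin)
  qed
  have G4: "lin_on vscale scM (Pk 0) eps"
    using FR1 Pkv[of 0] unfolding lin_on_def by (meson subsetD vecs_add vecs_sc)
  have G5: "eps ` Pk 0 = UNIV"
  proof (cases "s = 0")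
    case True
    have "c \<in> eps ` C0" for c
    proof -
      obtain y where y: "y \<in> vecs (b 0)" "c = eps y" using FR2 by (metis UNIV_I imageE)
      then have "c = eps (\<pi> y)" using epseq[OF True] by simp
      moreover have "\<pi> y \<in> C0" using y True by (simp add: C0_def)
      ultimately show ?thesis by blast
    qed
    then show ?thesis using True by (auto simp: Pk_def)
  next
    case False then show ?thesis using FR2 by (simp add: Pk_def)
  qed
  have G6: "\<forall>x\<in>Pk 0. eps x = 0 \<longleftrightarrow> x \<in> f 1 ` Pk 1"
  proof (cases "s = 0")
    case True
    have "eps x = 0 \<longleftrightarrow> x \<in> f 1 ` {0}" if x: "x \<in> C0" for x
    proof
      assume "eps x = 0"
      then have "x \<in> DD ` vecs (b (Suc s))" using FR3 C0v x True unfolding DD_def by auto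
      then have "x = 0" using C0inj x by blast
      then show "x \<in> f 1 ` {0}" using f0 by simp
    next
      assume "x \<in> f 1 ` {0}" then show "eps x = 0" using f0 eps0 by auto
    qed
    then show ?thesis using True by (simp add: Pk_def)
  next
    case False
    show ?thesis
    proof (cases "s = 1")
      case True
      then show ?thesis using FR3 imgeq by (simp add: Pk_def f_def)
    next
      case False
      then show ?thesis using FR3 \<open>s \<noteq> 0\<close> by (simp add: Pk_def f_def)
    qed
  qed
  have G7: "\<forall>k\<ge>1. \<forall>x\<in>Pk k. f k x = 0 \<longleftrightarrow> x \<in> f (Suc k) ` Pk (Suc k)"
  proof (intro allI impI ballI)
    fix k x assume k: "k \<ge> (1::nat)" and x: "x \<in> Pk k"
    show "f k x = 0 \<longleftrightarrow> x \<in> f (Suc k) ` Pk (Suc k)"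
    proof (cases "Suc k < s")
      case True
      then show ?thesis using FR4[OF k] x by (simp add: Pk_def f_def)
    next
      case False
      show ?thesis
      proof (cases "Suc k = s")
        case True
        then have "k < s" by simp
        then show ?thesis using FR4[OF k] x imgeq[of] True k by (simp add: Pk_def f_def)
      next
        case False
        show ?thesis
        proof (cases "k = s")
          case True
          have xC: "x \<in> C0" using x True by (simp add: Pk_def)
          have "f k x = 0 \<longleftrightarrow> x = 0"
          proof
            assume "f k x = 0"
            then have "x \<in> DD ` vecs (b (Suc s))" using FR4[OF k] C0v xC True unfolding DD_def f_def by auto
            then show "x = 0" using C0inj xC by blast
          qed (simp add: f0)
          then show ?thesis using True f0 by (simp add: Pk_def)
        next
          case False
          then have "x = 0" "Pk (Suc k) = {0}" using x \<open>\<not> Suc k < s\<close> \<open>Suc k \<noteq> s\<close> by (auto simp: Pk_def)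
          then show ?thesis using f0 by simp
        qed
      qed
    qed
  qed
  show ?thesis unfolding pd_less_def ts
    apply (rule exI[of _ b], rule exI[of _ Pk], rule exI[of _ f], rule exI[of _ eps])
    using G1 G2 G3 G4 G5 G6 G7 by (intro conjI)
qed

end
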